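(* Every locally stable commutative ring $R$ has stable range 2; that is, whenever $a,b,c\in R$ satisfy $aR+bR+cR=R$, there exist $y,z\in R$ such that $(a+cy)R+(b+cz)R=R$.
   Context: All rings are commutative with identity. A ring $S$ has stable range 1 if whenever $aS+bS=S$ there is $y\in S$ with $a+by$ a unit. $R$ is locally stable if whenever $a,b\in R$ with $aR+bR=R$ there is $y\in R$ such that $R/(a+by)R$ has stable range 1. *)

theory Defs
  imports "HOL-Algebra.QuotRing"
begin

definition ideal_sum2 :: "('a,'b) ring_scheme \<Rightarrow> 'a \<Rightarrow> 'a \<Rightarrow> 'a set" where
  "ideal_sum2 S a b =
     {a \<otimes>\<^bsub>S\<^esub> x \<oplus>\<^bsub>S\<^esub> b \<otimes>\<^bsub>S\<^esub> y | x y. x \<in> carrier S \<and> y \<in> carrier S}"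

definition ideal_sum3 :: "('a,'b) ring_scheme \<Rightarrow> 'a \<Rightarrow> 'a \<Rightarrow> 'a \<Rightarrow> 'a set" where
  "ideal_sum3 S a b c =
     {a \<otimes>\<^bsub>S\<^esub> x \<oplus>\<^bsub>S\<^esub> b \<otimes>\<^bsub>S\<^esub> y \<oplus>\<^bsub>S\<^esub> c \<otimes>\<^bsub>S\<^esub> z | x y z.
        x \<in> carrier S \<and> y \<in> carrier S \<and> z \<in> carrier S}"

definition stable_range_1 :: "('a,'b) ring_scheme \<Rightarrow> bool" where
  "stable_range_1 S \<longleftrightarrow>
     (\<forall>a\<in>carrier S. \<forall>b\<in>carrier S. ideal_sum2 S a b = carrier S \<longrightarrow>
        (\<exists>y\<in>carrier S. a \<oplus>\<^bsub>S\<^esub> b \<otimes>\<^bsub>S\<^esub> y \<in> Units S))"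

definition locally_stable :: "('a,'b) ring_scheme \<Rightarrow> bool" where
  "locally_stable R \<longleftrightarrow>
     (\<forall>a\<in>carrier R. \<forall>b\<in>carrier R. ideal_sum2 R a b = carrier R \<longrightarrow>
        (\<exists>y\<in>carrier R. stable_range_1 (R Quot (PIdl\<^bsub>R\<^esub> (a \<oplus>\<^bsub>R\<^esub> b \<otimes>\<^bsub>R\<^esub> y)))))"

end

theory Submission
  imports Defs
begin

lemma (in ideal) coset_eqI:
  assumes "x \<in> carrier R" "y \<in> carrier R" "x \<ominus> y \<in> I"
  shows "I +> x = I +> y"
proof -
  have "x \<in> I +> y" using a_rcos_module_minus[OF ring_axioms assms(2,1)] assms(3) by simp
  from a_repr_independence[OF this assms(2) a_subgroup] show ?thesis by simp
qed

lemma (in ideal) coset_eqD: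
  assumes "x \<in> carrier R" "y \<in> carrier R" "I +> x = I +> y"
  shows "x \<ominus> y \<in> I"
proof -
  have "x \<in> I +> y" using a_rcos_self[OF assms(1)] assms(3) by simp
  thus ?thesis using a_rcos_module_minus[OF ring_axioms assms(2,1)] by simp
qed

lemma (in ideal) quot_carrier: "carrier (R Quot I) = (+>) I ` carrier R"
  unfolding FactRing_def A_RCOSETS_def' by auto

lemma (in cring) main:
  assumes ls: "locally_stable R"
    and ab: "a \<in> carrier R" "b \<in> carrier R" "c \<in> carrier R"
    and s3: "ideal_sum3 R a b c = carrier R"
  shows "\<exists>y\<in>carrier R. \<exists>z\<in>carrier R.
           ideal_sum2 R (a \<oplus> c \<otimes> y) (b \<oplus> c \<otimes> z) = carrier R"
proof -
  have "\<one> \<in> ideal_sum3 R a b c" using s3 by simp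
  then obtain x y z where xyz: "x \<in> carrier R" "y \<in> carrier R" "z \<in> carrier R"
    and one: "\<one> = a \<otimes> x \<oplus> b \<otimes> y \<oplus> c \<otimes> z"
    unfolding ideal_sum3_def by auto
  define d where "d = a \<otimes> x \<oplus> c \<otimes> z"
  have dc: "d \<in> carrier R" using ab xyz d_def by simp
  have "ideal_sum2 R b d = carrier R"
  proof
    show "ideal_sum2 R b d \<subseteq> carrier R" unfolding ideal_sum2_def using ab dc by auto
    show "carrier R \<subseteq> ideal_sum2 R b d"
    proof
      fix q assume q: "q \<in> carrier R"
      have "q = (a \<otimes> x \<oplus> b \<otimes> y \<oplus> c \<otimes> z) \<otimes> q" using q by (simp add: one[symmetric])
      also have "\<dots> = b \<otimes> (y \<otimes> q) \<oplus> d \<otimes> q" using ab xyz q unfolding d_def by algebra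
      finally have "q = b \<otimes> (y \<otimes> q) \<oplus> d \<otimes> q" .
      thus "q \<in> ideal_sum2 R b d" unfolding ideal_sum2_def using q xyz by blast
    qed
  qed
  then obtain t where t: "t \<in> carrier R"
    and sr: "stable_range_1 (R Quot (PIdl (b \<oplus> d \<otimes> t)))"
    using ls ab dc unfolding locally_stable_def by blast
  define e where "e = b \<oplus> d \<otimes> t"
  have ec: "e \<in> carrier R" using ab dc t e_def by simp
  define I where "I = PIdl e"
  interpret I: ideal I R unfolding I_def by (rule cgenideal_ideal[OF ec])
  interpret h: ring_hom_cring R "R Quot I" "(+>) I"
    by (rule I.rcos_ring_hom_cring) (rule is_cring)
  define S where "S = R Quot I"
  have sr: "stable_range_1 S" using sr unfolding S_def I_def e_def .
  have inI: "r \<otimes> e \<in> I" if "r \<in> carrier R" for r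
    unfolding I_def cgenideal_def using that by blast
  have gen: "ideal_sum2 S (I +> a) (I +> c) = carrier S"
  proof
    show "ideal_sum2 S (I +> a) (I +> c) \<subseteq> carrier S"
      unfolding ideal_sum2_def S_def using ab by auto
    show "carrier S \<subseteq> ideal_sum2 S (I +> a) (I +> c)"
    proof
      fix Q assume "Q \<in> carrier S"
      then obtain q where q: "q \<in> carrier R" and Q: "Q = I +> q"
        unfolding S_def I.quot_carrier by auto
      define X where "X = q \<otimes> (x \<ominus> x \<otimes> t \<otimes> y)"
      define Y where "Y = q \<otimes> (z \<ominus> z \<otimes> t \<otimes> y)"
      have XY: "X \<in> carrier R" "Y \<in> carrier R" using q xyz t unfolding X_def Y_def by auto
      have "q \<ominus> (a \<otimes> X \<oplus> c \<otimes> Y) = (a \<otimes> x \<oplus> b \<otimes> y \<oplus> c \<otimes> z) \<otimes> q \<ominus> (a \<otimes> X \<oplus> c \<otimes> Y)"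
        using q by (simp add: one[symmetric])
      also have "\<dots> = (q \<otimes> y) \<otimes> e"
        using ab xyz q t unfolding X_def Y_def e_def d_def by algebra
      finally have "q \<ominus> (a \<otimes> X \<oplus> c \<otimes> Y) = (q \<otimes> y) \<otimes> e" .
      hence "I +> q = I +> (a \<otimes> X \<oplus> c \<otimes> Y)"
        using I.coset_eqI[of q "a \<otimes> X \<oplus> c \<otimes> Y"] inI[of "q \<otimes> y"] q xyz ab XY by auto
      also have "\<dots> = (I +> a) \<otimes>\<^bsub>S\<^esub> (I +> X) \<oplus>\<^bsub>S\<^esub> (I +> c) \<otimes>\<^bsub>S\<^esub> (I +> Y)"
        unfolding S_def using ab XY by simp
      finally show "Q \<in> ideal_sum2 S (I +> a) (I +> c)"
        unfolding ideal_sum2_def S_def Q using XY by blast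
    qed
  qed
  obtain Yb where Yb: "Yb \<in> carrier S" and U: "(I +> a) \<oplus>\<^bsub>S\<^esub> (I +> c) \<otimes>\<^bsub>S\<^esub> Yb \<in> Units S"
    using sr gen ab h.hom_closed[of a] h.hom_closed[of c] unfolding stable_range_1_def S_def by blast
  then obtain y0 where y0: "y0 \<in> carrier R" and Yb': "Yb = I +> y0"
    unfolding S_def I.quot_carrier by auto
  define s where "s = a \<oplus> c \<otimes> y0"
  have sc: "s \<in> carrier R" using ab y0 s_def by simp
  have "I +> s \<in> Units S" using U unfolding Yb' s_def S_def using ab y0 by simp
  then obtain V where V: "V \<in> carrier S" "V \<otimes>\<^bsub>S\<^esub> (I +> s) = \<one>\<^bsub>S\<^esub>"
    unfolding Units_def by auto
  then obtain w where w: "w \<in> carrier R" and Vw: "V = I +> w"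
    unfolding S_def I.quot_carrier by auto
  have "I +> (w \<otimes> s) = I +> \<one>" using V Vw w sc unfolding S_def by simp
  hence "w \<otimes> s \<ominus> \<one> \<in> I" using I.coset_eqD w sc by simp
  then obtain r where r: "r \<in> carrier R" and wr: "w \<otimes> s \<ominus> \<one> = r \<otimes> e"
    unfolding I_def cgenideal_def by auto
  define Z where "Z = (z \<ominus> y0 \<otimes> x) \<otimes> t"
  have Zc: "Z \<in> carrier R" using xyz y0 t Z_def by simp
  have "ideal_sum2 R s (b \<oplus> c \<otimes> Z) = carrier R"
  proof
    show "ideal_sum2 R s (b \<oplus> c \<otimes> Z) \<subseteq> carrier R"
      unfolding ideal_sum2_def using ab sc Zc by auto
    show "carrier R \<subseteq> ideal_sum2 R s (b \<oplus> c \<otimes> Z)"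
    proof
      fix q assume q: "q \<in> carrier R"
      define X where "X = q \<otimes> w \<ominus> r \<otimes> q \<otimes> x \<otimes> t"
      define Y where "Y = \<ominus> (r \<otimes> q)"
      have XY: "X \<in> carrier R" "Y \<in> carrier R" using q xyz t w r unfolding X_def Y_def by auto
      have ws: "w \<otimes> s \<ominus> r \<otimes> e = \<one>"
      proof -
        have "w \<otimes> s \<ominus> r \<otimes> e = (w \<otimes> s \<ominus> \<one>) \<ominus> r \<otimes> e \<oplus> \<one>"
          using w sc r ec by algebra
        also have "\<dots> = \<one>" unfolding wr using r ec by algebra
        finally show ?thesis .
      qed
      have "q = (w \<otimes> s \<ominus> r \<otimes> e) \<otimes> q" using q by (simp add: ws)
      also have "\<dots> = s \<otimes> X \<oplus> (b \<oplus> c \<otimes> Z) \<otimes> Y"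
        using ab xyz q t w r y0 unfolding X_def Y_def Z_def e_def d_def s_def by algebra
      finally have "q = s \<otimes> X \<oplus> (b \<oplus> c \<otimes> Z) \<otimes> Y" .
      thus "q \<in> ideal_sum2 R s (b \<oplus> c \<otimes> Z)" unfolding ideal_sum2_def using XY by blast
    qed
  qed
  thus ?thesis using y0 Zc unfolding s_def by blast
qed

theorem lemma3p1:
  fixes R :: "('a, 'b) ring_scheme"
  assumes "cring R"
    and "locally_stable R"
    and "a \<in> carrier R" and "b \<in> carrier R" and "c \<in> carrier R"
    and "ideal_sum3 R a b c = carrier R"
  shows "\<exists>y\<in>carrier R. \<exists>z\<in>carrier R.
           ideal_sum2 R (a \<oplus>\<^bsub>R\<^esub> c \<otimes>\<^bsub>R\<^esub> y) (b \<oplus>\<^bsub>R\<^esub> c \<otimes>\<^bsub>R\<^esub> z) = carrier R"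
  using cring.main[OF assms] .

end
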